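(* Let $X$ be a separable Banach space, let $T$ be a bounded linear operator on $X$ and let $\varepsilon\in(0,1)$. Let $\mathcal{D}_1$ be a dense subset of $X$. Let $\mathcal{D}_2$ be a countable subset of $X$ with a fixed enumeration $\mathcal{D}_2=\{y_k:k\in\mathbb{N}\}$. Assume that for each $x\in X\setminus\{0\}$ there are infinitely many integers $k\in\mathbb{N}$ such that $y_k\in B(x,\varepsilon\|x\|)$. Let $(n(k))_k\subset\mathbb{N}$ be an increasing sequence and let $S_{n(k)}:\mathcal{D}_2\to X$ be a sequence of maps such that: (1) $\lim_{k\to\infty}\|T^{n(k)}x\|=0$ for all $x\in\mathcal{D}_1$; (2) $\lim_{k\to\infty}\|S_{n(k)}y_k\|=0$; (3) $\lim_{k\to\infty}\|T^{n(k)}S_{n(k)}y_k-y_k\|=0$. Then $T$ is $\delta$-hypercyclic for every $\delta>\varepsilon$.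
   Context: $B(x,r)$ denotes the closed ball of center $x$ and radius $r$. For $\delta>0$, a bounded linear operator $T$ on a Banach space $X$ is called $\delta$-hypercyclic if there exists a vector $x\in X$ such that for every $y\in X\setminus\{0\}$ there exists $n\in\mathbb{N}$ with $\|T^nx-y\|\le\delta\|y\|$. *)

theory Defs
  imports "HOL-Analysis.Analysis"
begin

definition delta_hypercyclic :: "real \<Rightarrow> ('a::real_normed_vector \<Rightarrow> 'a) \<Rightarrow> bool" where
  "delta_hypercyclic \<delta> T \<longleftrightarrow>
     (\<exists>x. \<forall>y. y \<noteq> 0 \<longrightarrow> (\<exists>n::nat. norm ((T ^^ n) x - y) \<le> \<delta> * norm y))"

end

theory Submission
  imports Defs
begin

lemma bl_pow:
  fixes T :: "'a::real_normed_vector \<Rightarrow> 'a"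
  shows "bounded_linear T \<Longrightarrow> bounded_linear (T ^^ m)"
proof (induction m)
  case 0
  show ?case by (simp add: id_def)
next
  case (Suc m) then show ?case by (simp add: bounded_linear_compose)
qed

theorem theorem1p2:
  fixes T :: "'a::banach \<Rightarrow> 'a" and \<epsilon> :: real
    and D1 D2 :: "'a set" and y :: "nat \<Rightarrow> 'a"
    and n :: "nat \<Rightarrow> nat" and S :: "nat \<Rightarrow> 'a \<Rightarrow> 'a"
  assumes sep: "separable_space (euclidean :: 'a topology)"
    and lin: "bounded_linear T"
    and eps: "0 < \<epsilon>" "\<epsilon> < 1"
    and dense: "closure D1 = UNIV"
    and enum: "D2 = range y"
    and inf_often: "\<And>x. x \<noteq> 0 \<Longrightarrow> infinite {k. y k \<in> cball x (\<epsilon> * norm x)}"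
    and incr: "strict_mono n"
    and h1: "\<And>x. x \<in> D1 \<Longrightarrow> ((\<lambda>k. norm ((T ^^ n k) x)) \<longlongrightarrow> 0) sequentially"
    and h2: "((\<lambda>k. norm (S k (y k))) \<longlongrightarrow> 0) sequentially"
    and h3: "((\<lambda>k. norm ((T ^^ n k) (S k (y k)) - y k)) \<longlongrightarrow> 0) sequentially"
  shows "\<forall>\<delta>>\<epsilon>. delta_hypercyclic \<delta> T"
proof (intro allI impI)
  fix \<delta> assume d: "\<delta> > \<epsilon>"
  define \<theta> where "\<theta> = (\<epsilon> + \<delta>) / 2"
  define \<alpha> where "\<alpha> = min (1/2) ((\<delta> - \<epsilon>) / (2 * (\<theta> + 1)))"
  have th: "\<epsilon> < \<theta>" "\<theta> > 0" using d eps unfolding \<theta>_def by auto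
  have al12: "0 < \<alpha>" "\<alpha> \<le> 1/2"
    using d th unfolding \<alpha>_def by (auto simp: min_def)
  have "\<alpha> * (\<theta> + 1) \<le> (\<delta> - \<epsilon>) / (2 * (\<theta> + 1)) * (\<theta> + 1)"
    using th unfolding \<alpha>_def by (intro mult_right_mono) auto
  also have "\<dots> = (\<delta> - \<epsilon>) / 2" using th by (simp add: field_simps)
  finally have al: "0 < \<alpha>" "\<alpha> \<le> 1/2" "\<alpha> * (\<theta> + 1) \<le> (\<delta> - \<epsilon>) / 2"
    using al12 by auto
  obtain C where C: "countable C" "closure C = (UNIV :: 'a set)"
    using sep unfolding separable_space_def by (auto simp: euclidean_closure_of)
  define G where "G z = (\<Union>m. (T ^^ m) -` ball z (\<theta> * norm z))" for z
  have Gopen: "open (G z)" for z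
    unfolding G_def
    by (intro open_UN ballI open_vimage open_ball linear_continuous_on bl_pow[OF lin])
  have Gdense: "closure (G z) = UNIV" if z: "z \<noteq> 0" for z
  proof -
    have "u \<in> closure (G z)" for u
    proof (unfold closure_approachable, intro allI impI)
      fix r :: real assume r: "r > 0"
      obtain u' where u': "u' \<in> D1" "dist u' u < r/2"
      proof -
        have "u \<in> closure D1" using dense by simp
        then show ?thesis using that r unfolding closure_approachable
          by (meson half_gt_zero)
      qed
      define \<eta> where "\<eta> = (\<theta> - \<epsilon>) * norm z / 2"
      have eta: "\<eta> > 0" using th z unfolding \<eta>_def by auto
      have ev: "eventually (\<lambda>k. norm ((T ^^ n k) u') < \<eta> \<and> norm (S k (y k)) < r/2
          \<and> norm ((T ^^ n k) (S k (y k)) - y k) < \<eta>) sequentially"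
        using order_tendstoD(2)[OF h1[OF u'(1)] eta] order_tendstoD(2)[OF h2, of "r/2"]
          order_tendstoD(2)[OF h3 eta] r
        by (intro eventually_conj) auto
      then obtain N where N: "\<And>k. k \<ge> N \<Longrightarrow> norm ((T ^^ n k) u') < \<eta> \<and> norm (S k (y k)) < r/2
          \<and> norm ((T ^^ n k) (S k (y k)) - y k) < \<eta>"
        unfolding eventually_sequentially by blast
      obtain k where k: "k \<ge> N" "y k \<in> cball z (\<epsilon> * norm z)"
        using inf_often[OF z] unfolding infinite_nat_iff_unbounded_le by blast
      define x' where "x' = u' + S k (y k)"
      have blm: "bounded_linear (T ^^ n k)" by (rule bl_pow[OF lin])
      have Tx: "(T ^^ n k) x' = (T ^^ n k) u' + (T ^^ n k) (S k (y k))"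
        unfolding x'_def using bounded_linear.linear[OF blm] by (simp add: linear_add)
      have "norm ((T ^^ n k) x' - z) \<le> norm ((T ^^ n k) u') + norm ((T ^^ n k) (S k (y k)) - y k)
             + norm (y k - z)"
      proof -
        have e: "(T ^^ n k) x' - z = (T ^^ n k) u' + ((T ^^ n k) (S k (y k)) - y k) + (y k - z)"
          unfolding Tx by simp
        show ?thesis unfolding e
          by (rule order_trans[OF norm_triangle_ineq]) (simp add: norm_triangle_ineq)
      qed
      also have "\<dots> < \<eta> + \<eta> + \<epsilon> * norm z"
        using N[OF k(1)] k(2) by (simp add: dist_norm norm_minus_commute)
      also have "\<dots> = \<theta> * norm z" unfolding \<eta>_def by (simp add: field_simps)
      finally have "x' \<in> G z" unfolding G_def by (auto simp: dist_norm norm_minus_commute)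
      moreover have "dist x' u < r"
      proof -
        have "dist x' u \<le> dist u' u + norm (S k (y k))"
      proof -
        have "x' - u = (u' - u) + S k (y k)" unfolding x'_def by simp
        then show ?thesis unfolding dist_norm by (metis norm_triangle_ineq)
      qed
        then show ?thesis using u'(2) N[OF k(1)] by linarith
      qed
      ultimately show "\<exists>x\<in>G z. dist x u < r" by blast
    qed
    then show ?thesis by blast
  qed
  define \<G> where "\<G> = G ` (C - {0})"
  have "euclidean closure_of \<Inter>\<G> = topspace euclidean"
    by (rule Baire_category) (use C Gopen Gdense completely_metrizable_space_euclidean in
        \<open>auto simp: \<G>_def euclidean_closure_of\<close>)
  then have "closure (\<Inter>\<G>) = UNIV" by (simp add: euclidean_closure_of)
  then have "\<Inter>\<G> \<noteq> {}" by (metis closure_empty UNIV_not_empty)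
  then obtain x where x: "x \<in> \<Inter>\<G>" by blast
  show "delta_hypercyclic \<delta> T"
    unfolding delta_hypercyclic_def
  proof (rule exI[of _ x], intro allI impI)
    fix w :: 'a assume w: "w \<noteq> 0"
    have "\<alpha> * norm w > 0" using al w by auto
    then obtain z where z: "z \<in> C" "dist z w < \<alpha> * norm w"
    proof -
      have "w \<in> closure C" using C(2) by simp
      then show ?thesis using that \<open>\<alpha> * norm w > 0\<close> unfolding closure_approachable by meson
    qed
    have nz: "norm z \<le> (1 + \<alpha>) * norm w"
      using z(2) norm_triangle_ineq2[of z w] unfolding dist_norm by (simp add: algebra_simps)
    have "norm z \<ge> norm w - \<alpha> * norm w"
      using z(2) norm_triangle_ineq2[of w z] unfolding dist_norm
      by (simp add: norm_minus_commute)
    then have "z \<noteq> 0" using al w by (auto simp: algebra_simps)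
    then have "x \<in> G z" using x z(1) unfolding \<G>_def by auto
    then obtain m where m: "norm ((T ^^ m) x - z) < \<theta> * norm z"
      unfolding G_def by (auto simp: dist_norm norm_minus_commute)
    have "norm ((T ^^ m) x - w) \<le> norm ((T ^^ m) x - z) + norm (z - w)"
    proof -
      have "(T ^^ m) x - w = ((T ^^ m) x - z) + (z - w)" by simp
      then show ?thesis by (metis norm_triangle_ineq)
    qed
    also have "\<dots> \<le> \<theta> * ((1 + \<alpha>) * norm w) + \<alpha> * norm w"
      using m z(2) nz th(2) mult_left_mono[OF nz, of \<theta>] unfolding dist_norm by linarith
    also have "\<dots> = \<theta> * norm w + \<alpha> * (\<theta> + 1) * norm w" by (simp add: algebra_simps)
    also have "\<dots> \<le> \<theta> * norm w + (\<delta> - \<epsilon>) / 2 * norm w"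
      using al(3) by (intro add_left_mono mult_right_mono) auto
    also have "\<dots> = \<delta> * norm w" unfolding \<theta>_def by (simp add: field_simps)
    finally show "\<exists>m. norm ((T ^^ m) x - w) \<le> \<delta> * norm w" by blast
  qed
qed

end
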